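(* Let $B>0$ and $\beta>0$. Then $\mathcal{M}_{B,\beta}$ is equal in distribution to $\mathcal{M}_{B,\mathrm{flip}}\circ\mathcal{M}_{B,0}$; that is, for every $\boldsymbol g\in\mathbb{R}^d$ and every coordinate $i\in[d]$, $\Pr\big[[\mathcal{M}_{B,\beta}]_i(\boldsymbol g)=1\big]=\Pr\big[\mathcal{M}_{B,\mathrm{flip}}\big([\mathcal{M}_{B,0}]_i(\boldsymbol g)\big)=1\big]$, where the flip is applied independently of the randomness of $\mathcal{M}_{B,0}$.
   Context: For $B>0$, $\mathrm{clip}\{g,B\}=\max\{-B,\min\{B,g\}\}$. For $\beta\ge0$, the randomized compressor $\mathcal{M}_{B,\beta}:\mathbb{R}^d\to\{-1,1\}^d$ acts independently on each coordinate: $[\mathcal{M}_{B,\beta}]_i(\boldsymbol g)=1$ with probability $\frac{B+\beta+\mathrm{clip}\{g_i,B\}}{2B+2\beta}$ and $=-1$ otherwise. The DP-flip mechanism $\mathcal{M}_{B,\mathrm{flip}}:\{-1,1\}\to\{-1,1\}$ (depending on $B$ and $\beta$) maps $b\in\{-1,1\}$ to $b$ with probability $\frac{2B+\beta}{2(B+\beta)}$ and to $-b$ otherwise; $\mathcal{M}_{B,\mathrm{flip}}\circ\mathcal{M}_{B,0}$ applies it coordinate-wise to the output of $\mathcal{M}_{B,0}$. *)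

theory Defs
  imports "HOL-Analysis.Analysis" "HOL-Probability.Probability"
begin

definition clip :: "real \<Rightarrow> real \<Rightarrow> real" where
  "clip g B = max (- B) (min B g)"

definition comp_coord :: "real \<Rightarrow> real \<Rightarrow> real \<Rightarrow> int pmf" where
  "comp_coord B \<beta> x =
     map_pmf (\<lambda>b. if b then 1 else -1) (bernoulli_pmf ((B + \<beta> + clip x B) / (2*B + 2*\<beta>)))"

definition compressor :: "real \<Rightarrow> real \<Rightarrow> real^'n::finite \<Rightarrow> ('n \<Rightarrow> int) pmf" where
  "compressor B \<beta> g = Pi_pmf UNIV 0 (\<lambda>i. comp_coord B \<beta> (g $ i))"

definition dp_flip :: "real \<Rightarrow> real \<Rightarrow> int \<Rightarrow> int pmf" where
  "dp_flip B \<beta> b = map_pmf (\<lambda>k. if k then b else - b) (bernoulli_pmf ((2*B + \<beta>) / (2*(B + \<beta>))))"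

definition flip_comp :: "real \<Rightarrow> real \<Rightarrow> real^'n::finite \<Rightarrow> ('n \<Rightarrow> int) pmf" where
  "flip_comp B \<beta> g = compressor B 0 g \<bind> (\<lambda>v. Pi_pmf UNIV 0 (\<lambda>i. dp_flip B \<beta> (v i)))"

end

theory Submission
  imports Defs
begin
lemma pmf_map_bern:
  fixes a b :: int
  assumes "a \<noteq> b" "0 \<le> q" "q \<le> 1"
  shows "pmf (map_pmf (\<lambda>c. if c then a else b) (bernoulli_pmf q)) k
       = (if k = a then q else 0) + (if k = b then 1 - q else 0)"
proof -
  have "pmf (map_pmf (\<lambda>c. if c then a else b) (bernoulli_pmf q)) k
      = measure_pmf.prob (bernoulli_pmf q) ((\<lambda>c. if c then a else b) -` {k})"
    by (rule pmf_map)
  also have "\<dots> = (\<Sum>c\<in>(\<lambda>c. if c then a else b) -` {k}. pmf (bernoulli_pmf q) c)"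
    by (rule measure_measure_pmf_finite) simp
  also have "\<dots> = (if k = a then q else 0) + (if k = b then 1 - q else 0)"
  proof -
    have "(\<lambda>c. if c then a else b) -` {k} = (if k = a then {True} else {}) \<union> (if k = b then {False} else {})"
      using assms(1) by (auto split: if_splits)
    then show ?thesis using assms by auto
  qed
  finally show ?thesis .
qed

lemma coord:
  assumes "B > 0" "\<beta> > 0"
  shows "comp_coord B \<beta> x = comp_coord B 0 x \<bind> dp_flip B \<beta>"
proof (rule pmf_eqI)
  fix k :: int
  define c where "c = clip x B"
  have c: "-B \<le> c" "c \<le> B" using assms unfolding c_def clip_def by auto
  define p where "p = (B + \<beta> + c) / (2*B + 2*\<beta>)"
  define p0 where "p0 = (B + 0 + c) / (2*B + 2*0)"
  define q where "q = (2*B + \<beta>) / (2*(B + \<beta>))"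
  have p: "0 \<le> p" "p \<le> 1" using c assms by (auto simp: p_def field_simps)
  have p0: "0 \<le> p0" "p0 \<le> 1" using c assms by (auto simp: p0_def field_simps)
  have q: "0 \<le> q" "q \<le> 1" using c assms by (auto simp: q_def field_simps)
  have key: "p = p0 * q + (1 - p0) * (1 - q)"
  proof -
    have h1: "B + \<beta> \<noteq> 0" "B \<noteq> 0" using assms by auto
    show ?thesis unfolding p_def p0_def q_def using h1
      by (simp add: divide_simps) (simp add: algebra_simps)
  qed
  have L: "pmf (comp_coord B \<beta> x) k = (if k = 1 then p else 0) + (if k = -1 then 1 - p else 0)"
    unfolding comp_coord_def p_def c_def by (rule pmf_map_bern) (use p in \<open>auto simp: p_def c_def\<close>)
  have D: "pmf (dp_flip B \<beta> b) k = (if k = b then q else 0) + (if k = -b then 1 - q else 0)" if "b \<noteq> 0" for b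
    unfolding dp_flip_def q_def by (rule pmf_map_bern) (use q that in \<open>auto simp: q_def\<close>)
  have "comp_coord B 0 x \<bind> dp_flip B \<beta> = bernoulli_pmf p0 \<bind> (\<lambda>b. dp_flip B \<beta> (if b then 1 else -1))"
    unfolding comp_coord_def p0_def c_def by (simp add: bind_map_pmf)
  then have "pmf (comp_coord B 0 x \<bind> dp_flip B \<beta>) k
     = p0 * pmf (dp_flip B \<beta> 1) k + (1 - p0) * pmf (dp_flip B \<beta> (-1)) k"
    using p0 by (simp add: pmf_bind)
  also have "\<dots> = pmf (comp_coord B \<beta> x) k"
    unfolding L D[of 1, simplified] D[of "-1", simplified] using key
    by (auto simp: algebra_simps)
  finally show "pmf (comp_coord B \<beta> x) k = pmf (comp_coord B 0 x \<bind> dp_flip B \<beta>) k" by simp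
qed

theorem proposition1:
  fixes B \<beta> :: real and g :: "real^'n::finite"
  assumes "B > 0" and "\<beta> > 0"
  shows "compressor B \<beta> g = flip_comp B \<beta> g
         \<and> (\<forall>i. measure_pmf.prob (compressor B \<beta> g) {v. v i = 1}
                = measure_pmf.prob (flip_comp B \<beta> g) {v. v i = 1})"
proof -
  have "compressor B \<beta> g = Pi_pmf UNIV 0 (\<lambda>i. comp_coord B 0 (g $ i) \<bind> dp_flip B \<beta>)"
    unfolding compressor_def using coord[OF assms] by simp
  also have "\<dots> = flip_comp B \<beta> g"
    unfolding flip_comp_def compressor_def by (rule Pi_pmf_bind) simp
  finally show ?thesis by simp
qed
end
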